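(* With the notation below, there exists a strategy (ancilla $E$, unitary $U$ on $AE=B_0B_1B'$, projective measurement $\{R^{b'}\}_{b'\in\{0,1\}}$ on $B'$, and projective measurements $\{\Pi^{\mathbf e}_{i\mathbf s b'}\}_{\mathbf e\in\{0,1\}^n}$ on $B_i$) achieving $p_n=\bigl(\frac34\bigr)^n$ for every $n\ge1$. Notation: for $a\in\{0,1\}$, $\lvert \hat a\rangle=\frac{1}{\sqrt2}(\lvert 0\rangle+(-1)^a\lvert 1\rangle)$; for bits $r_0,r_1,s$, $\lvert\psi^{s}_{r_0r_1}\rangle_{A_0A_1}=\lvert r_0\rangle_{A_s}\otimes\lvert \hat r_1\rangle_{A_{\bar s}}$; for strings $\mathbf r_0,\mathbf r_1,\mathbf s\in\{0,1\}^n$, $\lvert\Psi^{\mathbf s}_{\mathbf r_0\mathbf r_1}\rangle_A=\bigotimes_{j=1}^n\lvert\psi^{s^j}_{r_0^jr_1^j}\rangle_{A_0^jA_1^j}$. A strategy consists of a finite-dimensional ancilla $E$ in a pure state $\lvert\chi\rangle$, a unitary $U$ on $AE$ with $AE=B_0B_1B'$ (finite-dimensional subsystems), a projective measurement $\{R^{b'}\}$ on $B'$, and for each $i,\mathbf s,b'$ a projective measurement $\{\Pi^{\mathbf e}_{i\mathbf s b'}\}_{\mathbf e\in\{0,1\}^n}$ on $B_i$; with $\lvert\Phi^{\mathbf s}_{\mathbf r_0\mathbf r_1}\rangle=U(\lvert\Psi^{\mathbf s}_{\mathbf r_0\mathbf r_1}\rangle\otimes\lvert\chi\rangle)$, $$p_n=\frac{1}{2^{3n}}\sum_{\mathbf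 r_0,\mathbf r_1,\mathbf s}\sum_{b'}\langle\Phi^{\mathbf s}_{\mathbf r_0\mathbf r_1}\rvert\,\Pi^{\mathbf r_{b'}}_{0\mathbf s b'}\otimes\Pi^{\mathbf r_{\bar b'}}_{1\mathbf s b'}\otimes R^{b'}\,\lvert\Phi^{\mathbf s}_{\mathbf r_0\mathbf r_1}\rangle.$$
   Context: $p_n$ is the probability that Bob simultaneously guesses $\mathbf r_{b'}$ from $B_0$ and $\mathbf r_{\bar b'}$ from $B_1$ for uniformly random $\mathbf r_0,\mathbf r_1,\mathbf s$, where $\bar b'=b'\oplus1$. *)

theory Defs
  imports Complex_Main "Jordan_Normal_Form.Matrix"
begin

definition adj :: "complex mat \<Rightarrow> complex mat" where
  "adj M = mat (dim_col M) (dim_row M) (\<lambda>(i,j). cnj (M $$ (j,i)))"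

definition unitary_mat :: "nat \<Rightarrow> complex mat \<Rightarrow> bool" where
  "unitary_mat d U \<longleftrightarrow> U \<in> carrier_mat d d \<and> U * adj U = 1\<^sub>m d \<and> adj U * U = 1\<^sub>m d"

text \<open>Kronecker (tensor) product of matrices and of vectors, standard ordering
  (the index of the first factor is the most significant).\<close>
definition kron :: "complex mat \<Rightarrow> complex mat \<Rightarrow> complex mat" where
  "kron A B = mat (dim_row A * dim_row B) (dim_col A * dim_col B)
     (\<lambda>(i,j). A $$ (i div dim_row B, j div dim_col B) * B $$ (i mod dim_row B, j mod dim_col B))"

definition kron_vec :: "complex vec \<Rightarrow> complex vec \<Rightarrow> complex vec" where
  "kron_vec v w = vec (dim_vec v * dim_vec w) (\<lambda>i. v $ (i div dim_vec w) * w $ (i mod dim_vec w))"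

definition unit_vec :: "nat \<Rightarrow> complex vec \<Rightarrow> bool" where
  "unit_vec d v \<longleftrightarrow> v \<in> carrier_vec d \<and> (\<Sum>i<d. cmod (v $ i) ^ 2) = 1"

definition expect :: "complex vec \<Rightarrow> complex mat \<Rightarrow> complex" where
  "expect \<phi> M = (\<Sum>i<dim_vec \<phi>. \<Sum>j<dim_vec \<phi>. cnj (\<phi> $ i) * M $$ (i,j) * \<phi> $ j)"

definition projector :: "nat \<Rightarrow> complex mat \<Rightarrow> bool" where
  "projector d P \<longleftrightarrow> P \<in> carrier_mat d d \<and> P * P = P \<and> adj P = P"

definition proj_meas :: "nat \<Rightarrow> 'k set \<Rightarrow> ('k \<Rightarrow> complex mat) \<Rightarrow> bool" where
  "proj_meas d X P \<longleftrightarrow> finite X \<and> (\<forall>x\<in>X. projector d (P x)) \<and>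
     (\<forall>i<d. \<forall>j<d. (\<Sum>x\<in>X. P x $$ (i,j)) = (if i = j then 1 else 0))"

section \<open>The states of the protocol (bits are booleans, True = 1)\<close>

definition bitstrings :: "nat \<Rightarrow> bool list set" where
  "bitstrings n = {xs. length xs = n}"

definition ket :: "bool \<Rightarrow> complex vec" where
  "ket a = vec 2 (\<lambda>i. if i = (if a then 1 else 0) then 1 else 0)"

definition ket_hat :: "bool \<Rightarrow> complex vec" where
  "ket_hat a = vec 2 (\<lambda>i. if i = 0 then 1 / complex_of_real (sqrt 2)
                         else (if a then -1 else 1) / complex_of_real (sqrt 2))"

text \<open>\<open>|\<psi>^s_{r0 r1}\<rangle>_{A0 A1} = |r0\<rangle>_{A_s} \<otimes> |\<hat>r1\<rangle>_{A_{\<not>s}}\<close>, written in the order \<open>A0 \<otimes> A1\<close>.\<close>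
definition psi :: "bool \<Rightarrow> bool \<Rightarrow> bool \<Rightarrow> complex vec" where
  "psi s r0 r1 = (if s then kron_vec (ket_hat r1) (ket r0) else kron_vec (ket r0) (ket_hat r1))"

text \<open>\<open>|\<Psi>^s_{r0 r1}\<rangle>_A = \<Otimes>_{j=1}^n |\<psi>^{s^j}_{r0^j r1^j}\<rangle>_{A0^j A1^j}\<close>; arguments \<open>s r0 r1\<close>.\<close>
fun Psi :: "bool list \<Rightarrow> bool list \<Rightarrow> bool list \<Rightarrow> complex vec" where
  "Psi (s # ss) (a # as) (b # bs) = kron_vec (psi s a b) (Psi ss as bs)"
| "Psi _ _ _ = vec 1 (\<lambda>_. 1)"

text \<open>A strategy for \<open>n\<close> rounds: ancilla \<open>E = \<complex>^dE\<close> in pure state \<open>\<chi>\<close>, unitary \<open>U\<close> on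
  \<open>AE = \<complex>^(4^n) \<otimes> \<complex>^dE\<close>, a decomposition \<open>AE = B0 B1 B'\<close> with \<open>B0 = \<complex>^d0\<close>, \<open>B1 = \<complex>^d1\<close>,
  \<open>B' = \<complex>^d2\<close> (standard tensor ordering), a projective measurement \<open>R\<close> on \<open>B'\<close> and
  projective measurements \<open>P0 s b'\<close> on \<open>B0\<close>, \<open>P1 s b'\<close> on \<open>B1\<close> with outcomes in \<open>{0,1}^n\<close>.\<close>
definition is_strategy :: "nat \<Rightarrow> nat \<Rightarrow> complex vec \<Rightarrow> complex mat \<Rightarrow> nat \<Rightarrow> nat \<Rightarrow> nat
    \<Rightarrow> (bool \<Rightarrow> complex mat)
    \<Rightarrow> (bool list \<Rightarrow> bool \<Rightarrow> bool list \<Rightarrow> complex mat)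
    \<Rightarrow> (bool list \<Rightarrow> bool \<Rightarrow> bool list \<Rightarrow> complex mat) \<Rightarrow> bool" where
  "is_strategy n dE \<chi> U d0 d1 d2 R P0 P1 \<longleftrightarrow>
     unit_vec dE \<chi> \<and>
     unitary_mat (4 ^ n * dE) U \<and>
     d0 * d1 * d2 = 4 ^ n * dE \<and>
     proj_meas d2 UNIV R \<and>
     (\<forall>s\<in>bitstrings n. \<forall>b'. proj_meas d0 (bitstrings n) (P0 s b') \<and>
                               proj_meas d1 (bitstrings n) (P1 s b'))"

text \<open>\<open>p_n\<close>; here \<open>r_{b'}\<close> is \<open>if b' then r1 else r0\<close>.\<close>
definition win_prob :: "nat \<Rightarrow> complex vec \<Rightarrow> complex mat
    \<Rightarrow> (bool \<Rightarrow> complex mat)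
    \<Rightarrow> (bool list \<Rightarrow> bool \<Rightarrow> bool list \<Rightarrow> complex mat)
    \<Rightarrow> (bool list \<Rightarrow> bool \<Rightarrow> bool list \<Rightarrow> complex mat) \<Rightarrow> complex" where
  "win_prob n \<chi> U R P0 P1 =
     1 / 2 ^ (3 * n) *
     (\<Sum>r0\<in>bitstrings n. \<Sum>r1\<in>bitstrings n. \<Sum>s\<in>bitstrings n. \<Sum>b'\<in>(UNIV :: bool set).
        expect (U *\<^sub>v kron_vec (Psi s r0 r1) \<chi>)
          (kron (kron (P0 s b' (if b' then r1 else r0)) (P1 s b' (if b' then r0 else r1))) (R b')))"

end

theory Submission
  imports Defs
begin


lemma mm_index: "i < dim_row A \<Longrightarrow> j < dim_col B \<Longrightarrow> dim_col A = dim_row B \<Longrightarrow>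
  (A * B) $$ (i,j) = (\<Sum>k<dim_col A. A $$ (i,k) * B $$ (k,j))"
  by (simp add: scalar_prod_def atLeast0LessThan)

lemma mv_index: "i < dim_row A \<Longrightarrow> dim_vec v = dim_col A \<Longrightarrow>
  (A *\<^sub>v v) $ i = (\<Sum>k<dim_col A. A $$ (i,k) * v $ k)"
  by (simp add: scalar_prod_def atLeast0LessThan)

lemma sum_split_add: "(\<Sum>k<(m::nat)+n. f k) = (\<Sum>k<m. f k) + (\<Sum>j<n. f (m+j))"
  by (induction n) (auto simp: add.assoc)

lemma sum_prod_idx: "(\<Sum>k<(a::nat)*b. f k) = (\<Sum>i<a. \<Sum>j<b. f (i*b+j))"
proof (induction a)
  case 0 then show ?case by simp
next
  case (Suc a)
  have "(\<Sum>k<Suc a * b. f k) = (\<Sum>k<a*b + b. f k)" by (simp add: add.commute)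
  also have "\<dots> = (\<Sum>k<a*b. f k) + (\<Sum>j<b. f (a*b+j))"
    by (rule sum_split_add)
  finally show ?case using Suc by simp
qed

lemma sum_prod_idx2: "(\<Sum>k<(a::nat)*b. f (k div b) (k mod b)) = (\<Sum>i<a. \<Sum>j<b. f i j)"
  by (subst sum_prod_idx) (intro sum.cong refl, auto)

lemma kron_dim[simp]: "dim_row (kron A B) = dim_row A * dim_row B" "dim_col (kron A B) = dim_col A * dim_col B"
  by (simp_all add: kron_def)

lemma kron_index: "i < dim_row A * dim_row B \<Longrightarrow> j < dim_col A * dim_col B \<Longrightarrow>
  kron A B $$ (i,j) = A $$ (i div dim_row B, j div dim_col B) * B $$ (i mod dim_row B, j mod dim_col B)"
  by (simp add: kron_def)

lemma kron_vec_dim[simp]: "dim_vec (kron_vec v w) = dim_vec v * dim_vec w"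
  by (simp add: kron_vec_def)

lemma kron_vec_index: "i < dim_vec v * dim_vec w \<Longrightarrow>
  kron_vec v w $ i = v $ (i div dim_vec w) * w $ (i mod dim_vec w)"
  by (simp add: kron_vec_def)

lemma adj_dim[simp]: "dim_row (adj A) = dim_col A" "dim_col (adj A) = dim_row A"
  by (simp_all add: adj_def)

lemma adj_index[simp]: "i < dim_col A \<Longrightarrow> j < dim_row A \<Longrightarrow> adj A $$ (i,j) = cnj (A $$ (j,i))"
  by (simp add: adj_def)

lemma div_lt: "i < a * (b::nat) \<Longrightarrow> i div b < a"
  by (simp add: less_mult_imp_div_less)

lemma mod_lt: "i < a * (b::nat) \<Longrightarrow> i mod b < b"
  by (metis mult_0_right not_less_zero mod_less_divisor neq0_conv)

lemma kron_mult_vec: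
  assumes "dim_vec u = dim_col A" "dim_vec v = dim_col B"
  shows "kron A B *\<^sub>v kron_vec u v = kron_vec (A *\<^sub>v u) (B *\<^sub>v v)"
proof (rule eq_vecI)
  fix i assume i: "i < dim_vec (kron_vec (A *\<^sub>v u) (B *\<^sub>v v))"
  then have i': "i < dim_row A * dim_row B" by simp
  have "(kron A B *\<^sub>v kron_vec u v) $ i =
      (\<Sum>k<dim_col A * dim_col B. kron A B $$ (i,k) * kron_vec u v $ k)"
    using i' assms by (subst mv_index) auto
  also have "\<dots> = (\<Sum>k<dim_col A * dim_col B.
     (A $$ (i div dim_row B, k div dim_col B) * u $ (k div dim_col B)) *
     (B $$ (i mod dim_row B, k mod dim_col B) * v $ (k mod dim_col B)))"
    using i' assms by (intro sum.cong refl) (simp add: kron_index kron_vec_index)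
  also have "\<dots> = (\<Sum>p<dim_col A. \<Sum>q<dim_col B.
     (A $$ (i div dim_row B, p) * u $ p) * (B $$ (i mod dim_row B, q) * v $ q))"
    by (rule sum_prod_idx2)
  also have "\<dots> = (\<Sum>p<dim_col A. A $$ (i div dim_row B, p) * u $ p) *
      (\<Sum>q<dim_col B. B $$ (i mod dim_row B, q) * v $ q)"
    by (simp add: sum_product)
  also have "\<dots> = kron_vec (A *\<^sub>v u) (B *\<^sub>v v) $ i"
    using i' assms by (simp add: kron_vec_index div_lt mod_lt scalar_prod_def atLeast0LessThan)
  finally show "(kron A B *\<^sub>v kron_vec u v) $ i = kron_vec (A *\<^sub>v u) (B *\<^sub>v v) $ i" .
qed simp

lemma kron_mult:
  assumes "dim_col A = dim_row C" "dim_col B = dim_row D"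
  shows "kron A B * kron C D = kron (A * C) (B * D)"
proof (rule eq_matI)
  fix i j assume i: "i < dim_row (kron (A * C) (B * D))" and j: "j < dim_col (kron (A * C) (B * D))"
  then have i': "i < dim_row A * dim_row B" and j': "j < dim_col C * dim_col D" by auto
  have "(kron A B * kron C D) $$ (i,j) =
      (\<Sum>k<dim_col A * dim_col B. kron A B $$ (i,k) * kron C D $$ (k,j))"
    using i' j' assms by (subst mm_index) auto
  also have "\<dots> = (\<Sum>k<dim_col A * dim_col B.
     (A $$ (i div dim_row B, k div dim_col B) * C $$ (k div dim_col B, j div dim_col D)) *
     (B $$ (i mod dim_row B, k mod dim_col B) * D $$ (k mod dim_col B, j mod dim_col D)))"
    using i' j' assms by (intro sum.cong refl) (simp add: kron_index div_lt mod_lt)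
  also have "\<dots> = (\<Sum>p<dim_col A. \<Sum>q<dim_col B.
     (A $$ (i div dim_row B, p) * C $$ (p, j div dim_col D)) * (B $$ (i mod dim_row B, q) * D $$ (q, j mod dim_col D)))"
    by (rule sum_prod_idx2)
  also have "\<dots> = (\<Sum>p<dim_col A. A $$ (i div dim_row B, p) * C $$ (p, j div dim_col D)) *
      (\<Sum>q<dim_col B. B $$ (i mod dim_row B, q) * D $$ (q, j mod dim_col D))"
    by (simp add: sum_product)
  also have "\<dots> = kron (A * C) (B * D) $$ (i,j)"
    using i' j' assms by (simp add: kron_index div_lt mod_lt scalar_prod_def atLeast0LessThan)
  finally show "(kron A B * kron C D) $$ (i,j) = kron (A * C) (B * D) $$ (i,j)" .
qed auto

lemma adj_kron: "adj (kron A B) = kron (adj A) (adj B)"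
  by (rule eq_matI) (auto simp: kron_index div_lt mod_lt)

lemma kron_one: "kron (1\<^sub>m a) (1\<^sub>m b) = 1\<^sub>m (a*b)"
proof (rule eq_matI)
  fix i j assume "i < dim_row (1\<^sub>m (a*b))" "j < dim_col (1\<^sub>m (a*b))"
  then have i: "i < a*b" and j: "j < a*b" by auto
  have "(i div b = j div b \<and> i mod b = j mod b) = (i = j)"
    by (metis div_mult_mod_eq)
  then show "kron (1\<^sub>m a) (1\<^sub>m b) $$ (i,j) = 1\<^sub>m (a*b) $$ (i,j)"
    using i j by (auto simp: kron_index div_lt mod_lt)
qed auto

lemma adj_one: "adj (1\<^sub>m n) = 1\<^sub>m n"
  by (rule eq_matI) auto

lemma adj_mult: assumes "dim_col A = dim_row B" shows "adj (A * B) = adj B * adj A"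
proof (rule eq_matI)
  fix i j assume "i < dim_row (adj B * adj A)" "j < dim_col (adj B * adj A)"
  then show "adj (A * B) $$ (i,j) = (adj B * adj A) $$ (i,j)"
    using assms by (simp add: scalar_prod_def atLeast0LessThan mult.commute cnj_sum)
qed auto

lemma unitary_mult: assumes "unitary_mat d A" "unitary_mat d B" shows "unitary_mat d (A * B)"
proof -
  have A: "A \<in> carrier_mat d d" "A * adj A = 1\<^sub>m d" "adj A * A = 1\<^sub>m d"
   and B: "B \<in> carrier_mat d d" "B * adj B = 1\<^sub>m d" "adj B * B = 1\<^sub>m d"
    using assms by (auto simp: unitary_mat_def)
  have aA: "adj A \<in> carrier_mat d d" and aB: "adj B \<in> carrier_mat d d" using A B by auto
  have adjAB: "adj (A * B) = adj B * adj A" using A B by (intro adj_mult) auto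
  have "(A * B) * (adj B * adj A) = A * (B * (adj B * adj A))"
    using A B aA aB by (simp only: assoc_mult_mat[OF A(1) B(1) mult_carrier_mat[OF aB aA]])
  also have "\<dots> = A * ((B * adj B) * adj A)"
    by (simp only: assoc_mult_mat[OF B(1) aB aA])
  also have "\<dots> = 1\<^sub>m d" using A B aA by (simp del: assoc_mult_mat)
  finally have 1: "(A * B) * adj (A * B) = 1\<^sub>m d" unfolding adjAB .
  have "(adj B * adj A) * (A * B) = adj B * (adj A * (A * B))"
    by (simp only: assoc_mult_mat[OF aB aA mult_carrier_mat[OF A(1) B(1)]])
  also have "\<dots> = adj B * ((adj A * A) * B)"
    by (simp only: assoc_mult_mat[OF aA A(1) B(1)])
  also have "\<dots> = 1\<^sub>m d" using A B aB by (simp del: assoc_mult_mat)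
  finally have 2: "adj (A * B) * (A * B) = 1\<^sub>m d" unfolding adjAB .
  show ?thesis using 1 2 A B unfolding unitary_mat_def by auto
qed

lemma unitary_kron: assumes "unitary_mat a A" "unitary_mat b B" shows "unitary_mat (a*b) (kron A B)"
proof -
  have A: "A \<in> carrier_mat a a" "A * adj A = 1\<^sub>m a" "adj A * A = 1\<^sub>m a"
   and B: "B \<in> carrier_mat b b" "B * adj B = 1\<^sub>m b" "adj B * B = 1\<^sub>m b"
    using assms by (auto simp: unitary_mat_def)
  have "kron A B * adj (kron A B) = 1\<^sub>m (a*b)"
    using A B by (simp add: adj_kron kron_mult kron_one)
  moreover have "adj (kron A B) * kron A B = 1\<^sub>m (a*b)"
    using A B by (simp add: adj_kron kron_mult kron_one)
  ultimately show ?thesis using A B unfolding unitary_mat_def by auto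
qed

lemma unitary_one: "unitary_mat n (1\<^sub>m n)"
  by (simp add: unitary_mat_def adj_one)

lemma delta_sum: "(\<Sum>k<(m::nat). (if k = a then 1 else 0) * f k) = (if a < m then f a else (0::complex))"
proof -
  have "(\<Sum>k<m. (if k = a then 1 else 0) * f k) = (\<Sum>k<m. if k = a then f k else 0)"
    by (intro sum.cong refl) auto
  then show ?thesis by (simp add: sum.delta)
qed

lemma delta_sum2: "a < m \<Longrightarrow>
  (\<Sum>k<(m::nat). (if k = a then 1 else 0) * cnj (if k = b then 1 else 0)) = (if a = b then 1 else (0::complex))"
  using delta_sum[where m=m and a=a and f="\<lambda>k. cnj (if k = b then 1 else 0)"] by simp

definition permat :: "nat \<Rightarrow> (nat \<Rightarrow> nat) \<Rightarrow> complex mat" where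
  "permat m \<sigma> = mat m m (\<lambda>(i,j). if j = \<sigma> i then 1 else 0)"

lemma permat_unitary:
  assumes "\<And>i. i < m \<Longrightarrow> \<sigma> i < m \<and> \<tau> i < m \<and> \<tau> (\<sigma> i) = i \<and> \<sigma> (\<tau> i) = i"
  shows "unitary_mat m (permat m \<sigma>)"
proof -
  have 1: "permat m \<sigma> * adj (permat m \<sigma>) = 1\<^sub>m m"
  proof (rule eq_matI)
    fix i j assume "i < dim_row (1\<^sub>m m)" "j < dim_col (1\<^sub>m m)"
    then have i: "i < m" and j: "j < m" by auto
    have si: "\<sigma> i < m" using assms[OF i] by blast
    have "(permat m \<sigma> * adj (permat m \<sigma>)) $$ (i,j) =
       (\<Sum>k<m. (if k = \<sigma> i then 1 else 0) * cnj (if k = \<sigma> j then 1 else 0))"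
      using i j by (simp add: scalar_prod_def atLeast0LessThan permat_def)
    also have "\<dots> = (if \<sigma> i = \<sigma> j then 1 else 0)"
      using si by (rule delta_sum2)
    also have "\<dots> = 1\<^sub>m m $$ (i,j)"
    proof -
      have "(\<sigma> i = \<sigma> j) = (i = j)"
      proof
        assume "\<sigma> i = \<sigma> j"
        then have "\<tau> (\<sigma> i) = \<tau> (\<sigma> j)" by simp
        then show "i = j" using assms[OF i] assms[OF j] by simp
      qed simp
      then show ?thesis using i j by simp
    qed
    finally show "(permat m \<sigma> * adj (permat m \<sigma>)) $$ (i,j) = 1\<^sub>m m $$ (i,j)" .
  qed (auto simp: permat_def)
  have 2: "adj (permat m \<sigma>) * permat m \<sigma> = 1\<^sub>m m"
  proof (rule eq_matI)
    fix i j assume "i < dim_row (1\<^sub>m m)" "j < dim_col (1\<^sub>m m)"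
    then have i: "i < m" and j: "j < m" by auto
    have e: "\<And>k x. k < m \<Longrightarrow> x < m \<Longrightarrow> (x = \<sigma> k) = (k = \<tau> x)"
    proof -
      fix k x assume k: "k < m" and x: "x < m"
      show "(x = \<sigma> k) = (k = \<tau> x)" using assms[OF k] assms[OF x] by auto
    qed
    have "(adj (permat m \<sigma>) * permat m \<sigma>) $$ (i,j) =
       (\<Sum>k<m. cnj (if i = \<sigma> k then 1 else 0) * (if j = \<sigma> k then 1 else 0))"
      using i j by (simp add: scalar_prod_def atLeast0LessThan permat_def)
    also have "\<dots> = (\<Sum>k<m. (if k = \<tau> j then 1 else 0) * cnj (if k = \<tau> i then 1 else 0))"
    proof (intro sum.cong refl)
      fix k assume "k \<in> {..<m}"
      then have k: "k < m" by simp
      have "(i = \<sigma> k) = (k = \<tau> i)" "(j = \<sigma> k) = (k = \<tau> j)" using e[OF k i] e[OF k j] by auto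
      then show "cnj (if i = \<sigma> k then 1 else 0) * (if j = \<sigma> k then 1 else 0) =
          (if k = \<tau> j then 1 else 0) * cnj (if k = \<tau> i then 1 else (0::complex))"
        by simp
    qed
    also have "\<dots> = (if \<tau> j = \<tau> i then 1 else 0)"
      using assms[OF j] by (intro delta_sum2) blast
    also have "\<dots> = (if \<tau> i = \<tau> j then 1 else 0)" by (simp add: eq_commute)
    also have "\<dots> = 1\<^sub>m m $$ (i,j)"
    proof -
      have "(\<tau> i = \<tau> j) = (i = j)"
      proof
        assume "\<tau> i = \<tau> j"
        then have "\<sigma> (\<tau> i) = \<sigma> (\<tau> j)" by simp
        then show "i = j" using assms[OF i] assms[OF j] by simp
      qed simp
      then show ?thesis using i j by simp
    qed
    finally show "(adj (permat m \<sigma>) * permat m \<sigma>) $$ (i,j) = 1\<^sub>m m $$ (i,j)" .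
  qed (auto simp: permat_def)
  show ?thesis using 1 2 unfolding unitary_mat_def by (auto simp: permat_def)
qed

lemma permat_mult_vec:
  assumes "dim_vec w = m" "\<And>i. i < m \<Longrightarrow> \<sigma> i < m"
  shows "permat m \<sigma> *\<^sub>v w = vec m (\<lambda>i. w $ \<sigma> i)"
proof (rule eq_vecI)
  fix i assume "i < dim_vec (vec m (\<lambda>i. w $ \<sigma> i))"
  then have i: "i < m" by simp
  have si: "\<sigma> i < m" using assms(2)[OF i] .
  have "(permat m \<sigma> *\<^sub>v w) $ i = (\<Sum>k<m. (if k = \<sigma> i then 1 else 0) * w $ k)"
    using i assms(1) by (simp add: scalar_prod_def atLeast0LessThan permat_def)
  also have "\<dots> = w $ \<sigma> i" using si by (simp add: delta_sum)
  finally show "(permat m \<sigma> *\<^sub>v w) $ i = vec m (\<lambda>i. w $ \<sigma> i) $ i" using i by simp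
qed (simp add: permat_def)

definition SW :: "nat \<Rightarrow> nat \<Rightarrow> complex mat" where
  "SW a b = permat (a*b) (\<lambda>i. (i mod a) * b + i div a)"

lemma idx_aux: assumes "i < a * (b::nat)" shows "(i mod a) * b + i div a < a * b"
proof -
  have "i div a < b" using assms by (simp add: div_lt mult.commute)
  moreover have "i mod a < a" using assms by (simp add: mod_lt mult.commute)
  ultimately have "(i mod a) * b + i div a < (i mod a) * b + b" by simp
  also have "\<dots> = (i mod a + 1) * b" by simp
  also have "\<dots> \<le> a * b" using \<open>i mod a < a\<close> by (intro mult_right_mono) auto
  finally show ?thesis .
qed

lemma idx_aux2: assumes "i < a * (b::nat)"
  shows "((i mod a) * b + i div a) div b = i mod a" "((i mod a) * b + i div a) mod b = i div a"
proof -
  have "i div a < b" using assms by (simp add: div_lt mult.commute)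
  then show "((i mod a) * b + i div a) div b = i mod a" "((i mod a) * b + i div a) mod b = i div a"
    by simp_all
qed

lemma SW_unitary: "unitary_mat (a*b) (SW a b)"
  unfolding SW_def
proof (rule permat_unitary[where \<tau>="\<lambda>i. (i mod b) * a + i div b"])
  fix i assume i: "i < a * b"
  then have i2: "i < b * a" by (simp add: mult.commute)
  show "(i mod a) * b + i div a < a * b \<and> (i mod b) * a + i div b < a * b \<and>
     ((i mod a) * b + i div a) mod b * a + ((i mod a) * b + i div a) div b = i \<and>
     ((i mod b) * a + i div b) mod a * b + ((i mod b) * a + i div b) div a = i"
  proof (intro conjI)
    show "(i mod a) * b + i div a < a * b" using idx_aux[OF i] .
    show "(i mod b) * a + i div b < a * b" using idx_aux[OF i2] by (simp add: mult.commute)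
    show "((i mod a) * b + i div a) mod b * a + ((i mod a) * b + i div a) div b = i"
      unfolding idx_aux2[OF i] by (rule div_mult_mod_eq)
    show "((i mod b) * a + i div b) mod a * b + ((i mod b) * a + i div b) div a = i"
      unfolding idx_aux2[OF i2] by (rule div_mult_mod_eq)
  qed
qed

lemma SW_kron_vec:
  assumes "dim_vec v = a" "dim_vec w = b"
  shows "SW a b *\<^sub>v kron_vec v w = kron_vec w v"
proof -
  have "SW a b *\<^sub>v kron_vec v w = vec (a*b) (\<lambda>i. kron_vec v w $ ((i mod a) * b + i div a))"
    unfolding SW_def using assms by (intro permat_mult_vec) (auto simp: idx_aux)
  also have "\<dots> = kron_vec w v"
  proof (rule eq_vecI)
    fix i assume "i < dim_vec (kron_vec w v)"
    then have i: "i < a * b" using assms by (simp add: mult.commute)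
    then show "vec (a*b) (\<lambda>i. kron_vec v w $ ((i mod a) * b + i div a)) $ i = kron_vec w v $ i"
      using assms idx_aux[OF i] idx_aux2[OF i]
      by (simp add: kron_vec_index mult.commute)
  qed (use assms in simp)
  finally show ?thesis .
qed

lemma kron_vec_assoc: "kron_vec (kron_vec u v) w = kron_vec u (kron_vec v w)"
proof (rule eq_vecI)
  fix i assume "i < dim_vec (kron_vec u (kron_vec v w))"
  then have i: "i < dim_vec u * (dim_vec v * dim_vec w)" by simp
  then have w: "dim_vec w > 0" by (metis mult_0_right not_less_zero neq0_conv)
  have 1: "i div (dim_vec v * dim_vec w) = i div dim_vec w div dim_vec v"
    by (metis div_mult2_eq mult.commute)
  have 0: "i mod (dim_vec v * dim_vec w) = dim_vec w * (i div dim_vec w mod dim_vec v) + i mod dim_vec w"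
    by (metis mod_mult2_eq mult.commute)
  have 2: "i mod (dim_vec v * dim_vec w) div dim_vec w = i div dim_vec w mod dim_vec v"
  proof -
    have w': "dim_vec w \<noteq> 0" using w by linarith
    show ?thesis unfolding 0 div_mult_self4[OF w'] by simp
  qed
  have 3: "i mod (dim_vec v * dim_vec w) mod dim_vec w = i mod dim_vec w"
    using w unfolding 0 by simp
  have i2: "i div dim_vec w < dim_vec u * dim_vec v" using i by (simp add: div_lt mult.assoc)
  have i3: "i mod (dim_vec v * dim_vec w) < dim_vec v * dim_vec w" using i mod_lt by blast
  show "kron_vec (kron_vec u v) w $ i = kron_vec u (kron_vec v w) $ i"
    using i i2 i3 1 2 3 by (simp add: kron_vec_index mult.assoc)
qed (simp add: mult.assoc)

lemma expect_alt: assumes "M \<in> carrier_mat (dim_vec \<phi>) (dim_vec \<phi>)"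
  shows "expect \<phi> M = (\<Sum>i<dim_vec \<phi>. cnj (\<phi> $ i) * (M *\<^sub>v \<phi>) $ i)"
  unfolding expect_def using assms
  by (intro sum.cong refl) (simp add: scalar_prod_def atLeast0LessThan sum_distrib_left mult.assoc)

lemma expect_kron:
  assumes "A \<in> carrier_mat (dim_vec u) (dim_vec u)" "B \<in> carrier_mat (dim_vec v) (dim_vec v)"
  shows "expect (kron_vec u v) (kron A B) = expect u A * expect v B"
proof -
  have "expect (kron_vec u v) (kron A B) =
     (\<Sum>i<dim_vec u * dim_vec v. cnj (kron_vec u v $ i) * (kron_vec (A *\<^sub>v u) (B *\<^sub>v v)) $ i)"
    using assms by (subst expect_alt) (auto simp: kron_mult_vec)
  also have "\<dots> = (\<Sum>i<dim_vec u * dim_vec v.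
      (cnj (u $ (i div dim_vec v)) * (A *\<^sub>v u) $ (i div dim_vec v)) *
      (cnj (v $ (i mod dim_vec v)) * (B *\<^sub>v v) $ (i mod dim_vec v)))"
    using assms by (intro sum.cong refl) (simp add: kron_vec_index)
  also have "\<dots> = (\<Sum>p<dim_vec u. \<Sum>q<dim_vec v.
      (cnj (u $ p) * (A *\<^sub>v u) $ p) * (cnj (v $ q) * (B *\<^sub>v v) $ q))"
    by (rule sum_prod_idx2)
  also have "\<dots> = expect u A * expect v B"
    using assms by (simp add: expect_alt sum_product)
  finally show ?thesis .
qed




definition hh :: complex where "hh = 1 / complex_of_real (sqrt 2)"

lemma hh_sq: "hh * hh = 1/2"
proof -
  have "complex_of_real (sqrt 2) * complex_of_real (sqrt 2) = 2"
    by (simp flip: of_real_mult)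
  then show ?thesis unfolding hh_def by (simp add: field_simps)
qed

lemma cnj_hh: "cnj hh = hh" unfolding hh_def by simp

lemma less2: "(i::nat) < 2 \<Longrightarrow> i = 0 \<or> i = 1" by auto

lemma ket_dim[simp]: "dim_vec (ket a) = 2" and ket_hat_dim[simp]: "dim_vec (ket_hat a) = 2"
  by (simp_all add: ket_def ket_hat_def)

lemma ket_hat_idx: "ket_hat a $ 0 = hh" "ket_hat a $ 1 = (if a then -hh else hh)" "ket_hat a $ Suc 0 = (if a then -hh else hh)"
  by (simp_all add: ket_hat_def hh_def)

lemma ket_idx: "ket a $ 0 = (if a then 0 else 1)" "ket a $ 1 = (if a then 1 else 0)" "ket a $ Suc 0 = (if a then 1 else 0)"
  by (simp_all add: ket_def)

definition proj :: "complex vec \<Rightarrow> complex mat" where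
  "proj v = mat (dim_vec v) (dim_vec v) (\<lambda>(i,j). v $ i * cnj (v $ j))"

lemma proj_hat: "proj (ket_hat a) = mat 2 2 (\<lambda>(i,j). if i = j then 1/2 else if a then -1/2 else 1/2)"
proof (rule eq_matI)
  fix i j assume "i < dim_row (mat 2 2 (\<lambda>(i,j). if i = j then 1/2 else if a then -1/2 else (1/2::complex)))"
     "j < dim_col (mat 2 2 (\<lambda>(i,j). if i = j then 1/2 else if a then -1/2 else (1/2::complex)))"
  then have "i = 0 \<or> i = 1" "j = 0 \<or> j = 1" by auto
  then show "proj (ket_hat a) $$ (i,j) = mat 2 2 (\<lambda>(i,j). if i = j then 1/2 else if a then -1/2 else (1/2::complex)) $$ (i,j)"
    by (auto simp: proj_def ket_hat_idx cnj_hh hh_sq)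
qed (auto simp: proj_def)

lemma proj_ket: "proj (ket a) = mat 2 2 (\<lambda>(i,j). if i = j \<and> i = (if a then 1 else 0) then 1 else 0)"
proof (rule eq_matI)
  fix i j assume "i < dim_row (mat 2 2 (\<lambda>(i,j). if i = j \<and> i = (if a then 1 else 0) then 1 else (0::complex)))"
     "j < dim_col (mat 2 2 (\<lambda>(i,j). if i = j \<and> i = (if a then 1 else 0) then 1 else (0::complex)))"
  then have "i = 0 \<or> i = 1" "j = 0 \<or> j = 1" by auto
  then show "proj (ket a) $$ (i,j) = mat 2 2 (\<lambda>(i,j). if i = j \<and> i = (if a then 1 else 0) then 1 else (0::complex)) $$ (i,j)"
    by (auto simp: proj_def ket_idx)
qed (auto simp: proj_def)

lemma sum2: "(\<Sum>k<2. f k) = f 0 + f (1::nat)"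
  by (simp add: numeral_2_eq_2)

lemma projector_hat: "projector 2 (proj (ket_hat a))"
  unfolding projector_def proj_hat
  by (auto intro!: eq_matI simp: scalar_prod_def atLeast0LessThan sum2 dest!: less2)

lemma projector_ket: "projector 2 (proj (ket a))"
  unfolding projector_def proj_ket
  by (auto intro!: eq_matI simp: scalar_prod_def atLeast0LessThan sum2 dest!: less2)

lemma sum_hat: "i < 2 \<Longrightarrow> j < 2 \<Longrightarrow>
   proj (ket_hat True) $$ (i,j) + proj (ket_hat False) $$ (i,j) = (if i = j then 1 else 0)"
  unfolding proj_hat by auto

lemma sum_ket: "i < 2 \<Longrightarrow> j < 2 \<Longrightarrow>
   proj (ket True) $$ (i,j) + proj (ket False) $$ (i,j) = (if i = j then 1 else 0)"
  unfolding proj_ket by (auto dest!: less2)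

lemma expect_hat: "expect (ket_hat b) (proj (ket_hat a)) = (if a = b then 1 else 0)"
  unfolding expect_def proj_hat
  by (auto simp: sum2 ket_hat_idx cnj_hh algebra_simps hh_sq)

lemma expect_ket: "expect (ket b) (proj (ket a)) = (if a = b then 1 else 0)"
  unfolding expect_def proj_ket
  by (auto simp: sum2 ket_idx)




definition xq :: "bool \<Rightarrow> bool \<Rightarrow> bool \<Rightarrow> complex vec" where
  "xq s a b = (if s then ket_hat b else ket a)"
definition yq :: "bool \<Rightarrow> bool \<Rightarrow> bool \<Rightarrow> complex vec" where
  "yq s a b = (if s then ket a else ket_hat b)"

lemma psi_split: "psi s a b = kron_vec (xq s a b) (yq s a b)"
  by (simp add: psi_def xq_def yq_def)

lemma xq_dim[simp]: "dim_vec (xq s a b) = 2" and yq_dim[simp]: "dim_vec (yq s a b) = 2"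
  by (simp_all add: xq_def yq_def)

fun Xs :: "bool list \<Rightarrow> bool list \<Rightarrow> bool list \<Rightarrow> complex vec" where
  "Xs (s # ss) (a # as) (b # bs) = kron_vec (xq s a b) (Xs ss as bs)"
| "Xs _ _ _ = vec 1 (\<lambda>_. 1)"

fun Ys :: "bool list \<Rightarrow> bool list \<Rightarrow> bool list \<Rightarrow> complex vec" where
  "Ys (s # ss) (a # as) (b # bs) = kron_vec (yq s a b) (Ys ss as bs)"
| "Ys _ _ _ = vec 1 (\<lambda>_. 1)"

lemma Xs_dim: "length ss = n \<Longrightarrow> length as = n \<Longrightarrow> length bs = n \<Longrightarrow> dim_vec (Xs ss as bs) = 2 ^ n"
  by (induction ss as bs arbitrary: n rule: Xs.induct) auto

lemma Ys_dim: "length ss = n \<Longrightarrow> length as = n \<Longrightarrow> length bs = n \<Longrightarrow> dim_vec (Ys ss as bs) = 2 ^ n"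
  by (induction ss as bs arbitrary: n rule: Ys.induct) auto

lemma Psi_dim: "length ss = n \<Longrightarrow> length as = n \<Longrightarrow> length bs = n \<Longrightarrow> dim_vec (Psi ss as bs) = 4 ^ n"
  by (induction ss as bs arbitrary: n rule: Psi.induct) (auto simp: psi_def)

primrec Um :: "nat \<Rightarrow> complex mat" where
  "Um 0 = 1\<^sub>m 1"
| "Um (Suc n) = kron (kron (1\<^sub>m 2) (SW 2 (2^n))) (1\<^sub>m (2^n)) * kron (1\<^sub>m 4) (Um n)"

lemma four_pow: "(4::nat) ^ n = 2 ^ n * 2 ^ n"
  by (induction n) auto

lemma dimSuc: "2 * (2 * 2 ^ n) * 2 ^ n = (4::nat) ^ Suc n" by (induction n) auto

lemma SW_dim: "dim_row (SW a b) = a * b" "dim_col (SW a b) = a * b"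
  by (simp_all add: SW_def permat_def)

lemma Um_unitary: "unitary_mat (4 ^ n) (Um n)"
proof (induction n)
  case 0 then show ?case by (simp add: unitary_one)
next
  case (Suc n)
  have e1: "2 * (2 * 2 ^ n) * 2 ^ n = (4::nat) ^ Suc n" by (induction n) auto
  have e2: "4 * 4 ^ n = (4::nat) ^ Suc n" by simp
  have "unitary_mat (2 * (2 * 2 ^ n) * 2 ^ n) (kron (kron (1\<^sub>m 2) (SW 2 (2^n))) (1\<^sub>m (2^n)))"
    by (intro unitary_kron unitary_one SW_unitary)
  then have u1: "unitary_mat (4 ^ Suc n) (kron (kron (1\<^sub>m 2) (SW 2 (2^n))) (1\<^sub>m (2^n)))"
    unfolding e1 .
  have "unitary_mat (4 * 4 ^ n) (kron (1\<^sub>m 4) (Um n))"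
    by (intro unitary_kron unitary_one Suc)
  then have u2: "unitary_mat (4 ^ Suc n) (kron (1\<^sub>m 4) (Um n))" unfolding e2 .
  show ?case unfolding Um.simps by (rule unitary_mult[OF u1 u2])
qed

lemma Um_carrier: "Um n \<in> carrier_mat (4^n) (4^n)"
  using Um_unitary[of n] unfolding unitary_mat_def by blast

lemma one_mult_vec: assumes "dim_vec (v::complex vec) = n" shows "1\<^sub>m n *\<^sub>v v = v"
proof -
  have "v \<in> carrier_vec n" using assms by (rule carrier_vecI)
  then show ?thesis by (rule one_mult_mat_vec)
qed

lemma Um_Psi:
  "length ss = n \<Longrightarrow> length as = n \<Longrightarrow> length bs = n \<Longrightarrow>
   Um n *\<^sub>v Psi ss as bs = kron_vec (Xs ss as bs) (Ys ss as bs)"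
proof (induction n arbitrary: ss as bs)
  case 0
  then show ?case
    by (auto intro!: eq_vecI simp: kron_vec_index one_mult_vec)
next
  case (Suc n)
  from Suc.prems(1) obtain s ss' where l1: "ss = s # ss'" "length ss' = n" by (cases ss) auto
  from Suc.prems(2) obtain a as' where l2: "as = a # as'" "length as' = n" by (cases as) auto
  from Suc.prems(3) obtain b bs' where l3: "bs = b # bs'" "length bs' = n" by (cases bs) auto
  note l = l1(1) l2(1) l3(1) l1(2) l2(2) l3(2)
  define x where "x = xq s a b"
  define y where "y = yq s a b"
  define X where "X = Xs ss' as' bs'"
  define Y where "Y = Ys ss' as' bs'"
  define P where "P = Psi ss' as' bs'"
  have dx: "dim_vec x = 2" "dim_vec y = 2" unfolding x_def y_def by auto
  have dX: "dim_vec X = 2^n" "dim_vec Y = 2^n" unfolding X_def Y_def using l Xs_dim Ys_dim by auto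
  have dP: "dim_vec P = 4^n" unfolding P_def using l Psi_dim by auto
  have IH: "Um n *\<^sub>v P = kron_vec X Y" unfolding P_def X_def Y_def using Suc l by auto
  have ps: "Psi ss as bs = kron_vec (kron_vec x y) P"
    unfolding l x_def y_def P_def by (simp add: psi_split)
  have c1: "kron (kron (1\<^sub>m 2) (SW 2 (2^n))) (1\<^sub>m (2^n)) \<in> carrier_mat (4 ^ Suc n) (4 ^ Suc n)"
  proof -
    have "dim_row (kron (kron (1\<^sub>m 2) (SW 2 (2^n))) (1\<^sub>m (2^n))) = 2 * (2 * 2 ^ n) * 2 ^ n"
         "dim_col (kron (kron (1\<^sub>m 2) (SW 2 (2^n))) (1\<^sub>m (2^n))) = 2 * (2 * 2 ^ n) * 2 ^ n"
      by (simp_all add: SW_def permat_def)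
    then show ?thesis unfolding dimSuc[symmetric] by (intro carrier_matI)
  qed
  have c2: "kron (1\<^sub>m 4) (Um n) \<in> carrier_mat (4 ^ Suc n) (4 ^ Suc n)"
    using carrier_matD[OF Um_carrier[of n]] by (intro carrier_matI) simp_all
  have cv: "kron_vec (kron_vec x y) P \<in> carrier_vec (4 ^ Suc n)"
    using dx dP by (intro carrier_vecI) simp
  define K1 where "K1 = kron (kron (1\<^sub>m 2) (SW 2 (2^n))) (1\<^sub>m (2^n))"
  have s1: "kron (1\<^sub>m 4) (Um n) *\<^sub>v kron_vec (kron_vec x y) P = kron_vec (kron_vec x y) (kron_vec X Y)"
    using dx dP Um_carrier[of n] by (subst kron_mult_vec) (auto simp: one_mult_vec IH)
  have s2: "kron_vec (kron_vec x y) (kron_vec X Y) = kron_vec (kron_vec x (kron_vec y X)) Y"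
    by (simp add: kron_vec_assoc)
  have s3: "K1 *\<^sub>v kron_vec (kron_vec x (kron_vec y X)) Y = kron_vec (kron_vec x (kron_vec X y)) Y"
  proof -
    have d1: "dim_col (kron (1\<^sub>m 2) (SW 2 (2^n))) = dim_vec (kron_vec x (kron_vec y X))"
      using dx dX by (simp add: SW_dim)
    have d2: "dim_col (SW 2 (2^n)) = dim_vec (kron_vec y X)"
      using dx dX by (simp add: SW_dim)
    have d3: "dim_vec Y = dim_col (1\<^sub>m (2^n) :: complex mat)" using dX by simp
    have d4: "dim_vec x = dim_col (1\<^sub>m 2 :: complex mat)" using dx by simp
    have "K1 *\<^sub>v kron_vec (kron_vec x (kron_vec y X)) Y =
       kron_vec (kron (1\<^sub>m 2) (SW 2 (2^n)) *\<^sub>v kron_vec x (kron_vec y X)) (1\<^sub>m (2^n) *\<^sub>v Y)"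
      unfolding K1_def by (rule kron_mult_vec[OF d1[symmetric] d3])
    also have "kron (1\<^sub>m 2) (SW 2 (2^n)) *\<^sub>v kron_vec x (kron_vec y X) =
        kron_vec (1\<^sub>m 2 *\<^sub>v x) (SW 2 (2^n) *\<^sub>v kron_vec y X)"
      by (rule kron_mult_vec[OF d4 d2[symmetric]])
    finally show ?thesis using dx dX by (simp add: one_mult_vec SW_kron_vec)
  qed
  have s4: "kron_vec (kron_vec x (kron_vec X y)) Y = kron_vec (Xs ss as bs) (Ys ss as bs)"
    unfolding l x_def y_def X_def Y_def by (simp add: kron_vec_assoc)
  have "Um (Suc n) *\<^sub>v Psi ss as bs = K1 *\<^sub>v (kron (1\<^sub>m 4) (Um n) *\<^sub>v kron_vec (kron_vec x y) P)"
    unfolding ps Um.simps K1_def using c1 c2 cv by (rule assoc_mult_mat_vec)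
  then show ?case unfolding s1 s2 s3 s4 .
qed




fun Pm :: "(bool \<Rightarrow> bool \<Rightarrow> complex mat) \<Rightarrow> bool list \<Rightarrow> bool list \<Rightarrow> complex mat" where
  "Pm f (s # ss) (e # es) = kron (f s e) (Pm f ss es)"
| "Pm f _ _ = 1\<^sub>m 1"

definition qubit_meas :: "(bool \<Rightarrow> bool \<Rightarrow> complex mat) \<Rightarrow> bool" where
  "qubit_meas f \<longleftrightarrow> (\<forall>s e. projector 2 (f s e)) \<and>
     (\<forall>s i j. i < 2 \<longrightarrow> j < 2 \<longrightarrow> f s True $$ (i,j) + f s False $$ (i,j) = (if i = j then 1 else 0))"

definition q0 :: "bool \<Rightarrow> bool \<Rightarrow> complex mat" where
  "q0 s e = proj (if s then ket_hat e else ket e)"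
definition q1 :: "bool \<Rightarrow> bool \<Rightarrow> complex mat" where
  "q1 s e = proj (if s then ket e else ket_hat e)"

lemma qm0: "qubit_meas q0"
  unfolding qubit_meas_def q0_def
  by (auto simp: projector_hat projector_ket sum_hat sum_ket)

lemma qm1: "qubit_meas q1"
  unfolding qubit_meas_def q1_def
  by (auto simp: projector_hat projector_ket sum_hat sum_ket)

lemma Pm_proj:
  assumes "qubit_meas f"
  shows "length ss = n \<Longrightarrow> length es = n \<Longrightarrow> projector (2^n) (Pm f ss es)"
proof (induction n arbitrary: ss es)
  case 0
  then show ?case by (simp add: projector_def adj_one)
next
  case (Suc n)
  from Suc.prems(1) obtain s ss' where l1: "ss = s # ss'" "length ss' = n" by (cases ss) auto
  from Suc.prems(2) obtain e es' where l2: "es = e # es'" "length es' = n" by (cases es) auto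
  have A: "f s e \<in> carrier_mat 2 2" "f s e * f s e = f s e" "adj (f s e) = f s e"
    using assms unfolding qubit_meas_def projector_def by auto
  have B: "Pm f ss' es' \<in> carrier_mat (2^n) (2^n)" "Pm f ss' es' * Pm f ss' es' = Pm f ss' es'"
     "adj (Pm f ss' es') = Pm f ss' es'"
    using Suc.IH[OF l1(2) l2(2)] unfolding projector_def by auto
  have "kron (f s e) (Pm f ss' es') * kron (f s e) (Pm f ss' es') = kron (f s e) (Pm f ss' es')"
    using A B by (subst kron_mult) auto
  moreover have "adj (kron (f s e) (Pm f ss' es')) = kron (f s e) (Pm f ss' es')"
    using A B by (simp add: adj_kron)
  moreover have "kron (f s e) (Pm f ss' es') \<in> carrier_mat (2 ^ Suc n) (2 ^ Suc n)"
    using carrier_matD[OF A(1)] carrier_matD[OF B(1)] by (intro carrier_matI) simp_all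
  ultimately show ?case unfolding l1 l2 projector_def by simp
qed

lemma bits_Suc: "bitstrings (Suc n) = Cons True ` bitstrings n \<union> Cons False ` bitstrings n"
proof
  show "bitstrings (Suc n) \<subseteq> Cons True ` bitstrings n \<union> Cons False ` bitstrings n"
  proof
    fix x assume "x \<in> bitstrings (Suc n)"
    then obtain y ys where "x = y # ys" "length ys = n" by (cases x) (auto simp: bitstrings_def)
    then show "x \<in> Cons True ` bitstrings n \<union> Cons False ` bitstrings n"
      by (cases y) (auto simp: bitstrings_def)
  qed
qed (auto simp: bitstrings_def)

lemma bits_0: "bitstrings 0 = {[]}" by (auto simp: bitstrings_def)

lemma finite_bits: "finite (bitstrings n)"
  by (induction n) (auto simp: bits_Suc bits_0)

lemma sum_bits_Suc: "(\<Sum>x\<in>bitstrings (Suc n). F x) =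
   (\<Sum>xs\<in>bitstrings n. F (True # xs)) + (\<Sum>xs\<in>bitstrings n. F (False # xs))"
proof -
  have "(\<Sum>x\<in>bitstrings (Suc n). F x) = (\<Sum>x\<in>Cons True ` bitstrings n. F x) + (\<Sum>x\<in>Cons False ` bitstrings n. F x)"
    unfolding bits_Suc by (rule sum.union_disjoint) (auto simp: finite_bits)
  also have "\<dots> = (\<Sum>xs\<in>bitstrings n. F (True # xs)) + (\<Sum>xs\<in>bitstrings n. F (False # xs))"
    by (simp add: sum.reindex)
  finally show ?thesis .
qed

lemma Pm_sum:
  assumes "qubit_meas f"
  shows "length ss = n \<Longrightarrow> i < 2^n \<Longrightarrow> j < 2^n \<Longrightarrow>
    (\<Sum>e\<in>bitstrings n. Pm f ss e $$ (i,j)) = (if i = j then 1 else 0)"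
proof (induction n arbitrary: ss i j)
  case 0
  then show ?case by (simp add: bits_0)
next
  case (Suc n)
  from Suc.prems(1) obtain s ss' where l1: "ss = s # ss'" "length ss' = n" by (cases ss) auto
  have cf: "\<And>e. f s e \<in> carrier_mat 2 2" using assms unfolding qubit_meas_def projector_def by auto
  have cP: "\<And>es. es \<in> bitstrings n \<Longrightarrow> Pm f ss' es \<in> carrier_mat (2^n) (2^n)"
    using Pm_proj[OF assms l1(2)] unfolding projector_def bitstrings_def by auto
  have i: "i < 2 * 2^n" and j: "j < 2 * 2^n" using Suc.prems by auto
  have idx: "\<And>e es. es \<in> bitstrings n \<Longrightarrow> Pm f (s # ss') (e # es) $$ (i,j) =
      f s e $$ (i div 2^n, j div 2^n) * Pm f ss' es $$ (i mod 2^n, j mod 2^n)"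
  proof -
    fix e es assume "es \<in> bitstrings n"
    note c = carrier_matD[OF cf[of e]] carrier_matD[OF cP[OF this]]
    show "Pm f (s # ss') (e # es) $$ (i,j) =
      f s e $$ (i div 2^n, j div 2^n) * Pm f ss' es $$ (i mod 2^n, j mod 2^n)"
      using i j c by (simp add: kron_index)
  qed
  have id: "i div 2^n < 2" "j div 2^n < 2" "i mod 2^n < 2^n" "j mod 2^n < 2^n"
    using i j by (auto simp: div_lt mod_lt)
  have "(\<Sum>e\<in>bitstrings (Suc n). Pm f ss e $$ (i,j)) =
      f s True $$ (i div 2^n, j div 2^n) * (\<Sum>es\<in>bitstrings n. Pm f ss' es $$ (i mod 2^n, j mod 2^n)) +
      f s False $$ (i div 2^n, j div 2^n) * (\<Sum>es\<in>bitstrings n. Pm f ss' es $$ (i mod 2^n, j mod 2^n))"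
  proof -
    have "(\<Sum>e\<in>bitstrings (Suc n). Pm f ss e $$ (i,j)) =
      (\<Sum>es\<in>bitstrings n. f s True $$ (i div 2^n, j div 2^n) * Pm f ss' es $$ (i mod 2^n, j mod 2^n)) +
      (\<Sum>es\<in>bitstrings n. f s False $$ (i div 2^n, j div 2^n) * Pm f ss' es $$ (i mod 2^n, j mod 2^n))"
      unfolding sum_bits_Suc l1 by (intro arg_cong2[where f="(+)"] sum.cong refl) (simp_all only: idx)
    then show ?thesis by (simp add: sum_distrib_left)
  qed
  also have "\<dots> = (f s True $$ (i div 2^n, j div 2^n) + f s False $$ (i div 2^n, j div 2^n)) *
      (if i mod 2^n = j mod 2^n then 1 else 0)"
    using Suc.IH[OF l1(2) id(3) id(4)] by (simp add: distrib_right)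
  also have "\<dots> = (if i div 2^n = j div 2^n then 1 else 0) * (if i mod 2^n = j mod 2^n then 1 else 0)"
    using assms id unfolding qubit_meas_def by simp
  also have "\<dots> = (if i = j then 1 else 0)"
  proof -
    have "(i div 2^n = j div 2^n \<and> i mod 2^n = j mod 2^n) = (i = j)"
      by (metis div_mult_mod_eq)
    then show ?thesis by auto
  qed
  finally show ?case .
qed




fun G :: "bool list \<Rightarrow> bool list \<Rightarrow> bool list \<Rightarrow> complex" where
  "G (c # cs) (a # as) (b # bs) = (if c then (if a = b then 1 else 0) else 1) * G cs as bs"
| "G _ _ _ = 1"

lemma G_idem: "G ss as bs * G ss as bs = G ss as bs"
  by (induction ss as bs rule: G.induct) auto

lemma expect_one1: "expect (vec 1 (\<lambda>_. 1)) (1\<^sub>m 1) = 1"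
  by (simp add: expect_def)

lemma q_carrier: "q0 s e \<in> carrier_mat 2 2" "q1 s e \<in> carrier_mat 2 2"
  using qm0 qm1 unfolding qubit_meas_def projector_def by auto

lemma Pm_carrier: "qubit_meas f \<Longrightarrow> length ss = n \<Longrightarrow> length es = n \<Longrightarrow> Pm f ss es \<in> carrier_mat (2^n) (2^n)"
  using Pm_proj unfolding projector_def by blast

lemma EX: "length ss = n \<Longrightarrow> length as = n \<Longrightarrow> length bs = n \<Longrightarrow>
  expect (Xs ss as bs) (Pm q0 ss as) = G ss as bs"
proof (induction n arbitrary: ss as bs)
  case 0 then show ?case using expect_one1 by simp
next
  case (Suc n)
  from Suc.prems(1) obtain s ss' where l1: "ss = s # ss'" "length ss' = n" by (cases ss) auto
  from Suc.prems(2) obtain a as' where l2: "as = a # as'" "length as' = n" by (cases as) auto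
  from Suc.prems(3) obtain b bs' where l3: "bs = b # bs'" "length bs' = n" by (cases bs) auto
  have c1: "q0 s a \<in> carrier_mat (dim_vec (xq s a b)) (dim_vec (xq s a b))" using q_carrier by simp
  have c2: "Pm q0 ss' as' \<in> carrier_mat (dim_vec (Xs ss' as' bs')) (dim_vec (Xs ss' as' bs'))"
    using Pm_carrier[OF qm0 l1(2) l2(2)] Xs_dim[OF l1(2) l2(2) l3(2)] by simp
  have e: "expect (xq s a b) (q0 s a) = (if s then (if a = b then 1 else 0) else 1)"
    by (cases s) (auto simp: xq_def q0_def expect_hat expect_ket)
  show ?case unfolding l1 l2 l3 Xs.simps Pm.simps expect_kron[OF c1 c2] e
    using Suc.IH[OF l1(2) l2(2) l3(2)] by simp
qed

lemma EY: "length ss = n \<Longrightarrow> length as = n \<Longrightarrow> length bs = n \<Longrightarrow>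
  expect (Ys ss as bs) (Pm q1 ss bs) = G ss as bs"
proof (induction n arbitrary: ss as bs)
  case 0 then show ?case using expect_one1 by simp
next
  case (Suc n)
  from Suc.prems(1) obtain s ss' where l1: "ss = s # ss'" "length ss' = n" by (cases ss) auto
  from Suc.prems(2) obtain a as' where l2: "as = a # as'" "length as' = n" by (cases as) auto
  from Suc.prems(3) obtain b bs' where l3: "bs = b # bs'" "length bs' = n" by (cases bs) auto
  have c1: "q1 s b \<in> carrier_mat (dim_vec (yq s a b)) (dim_vec (yq s a b))" using q_carrier by simp
  have c2: "Pm q1 ss' bs' \<in> carrier_mat (dim_vec (Ys ss' as' bs')) (dim_vec (Ys ss' as' bs'))"
    using Pm_carrier[OF qm1 l1(2) l3(2)] Ys_dim[OF l1(2) l2(2) l3(2)] by simp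
  have e: "expect (yq s a b) (q1 s b) = (if s then (if a = b then 1 else 0) else 1)"
    by (cases s; cases a; cases b) (auto simp: yq_def q1_def expect_hat expect_ket)
  show ?case unfolding l1 l2 l3 Ys.simps Pm.simps expect_kron[OF c1 c2] e
    using Suc.IH[OF l1(2) l2(2) l3(2)] by simp
qed

lemma G_sum: "(\<Sum>r0\<in>bitstrings n. \<Sum>r1\<in>bitstrings n. \<Sum>s\<in>bitstrings n. G s r0 r1) = 6 ^ n"
proof (induction n)
  case 0 then show ?case by (simp add: bits_0)
next
  case (Suc n)
  show ?case by (simp add: sum_bits_Suc sum.distrib Suc.IH)
qed

lemma kron_vec_chi: "kron_vec w (vec 1 (\<lambda>_. 1)) = w"
  by (rule eq_vecI) (auto simp: kron_vec_index)

lemma kron_one1: "kron M (1\<^sub>m 1) = M"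
  by (rule eq_matI) (auto simp: kron_index)

lemma kron_zero1: "kron M (0\<^sub>m 1 1) = 0\<^sub>m (dim_row M) (dim_col M)"
  by (rule eq_matI) (auto simp: kron_index)

lemma expect_zero: "dim_vec \<phi> = a \<Longrightarrow> dim_vec \<phi> = b \<Longrightarrow> expect \<phi> (0\<^sub>m a b) = 0"
  unfolding expect_def by (intro sum.neutral ballI) auto




theorem mainTheorem2:
  fixes n :: nat
  assumes "n \<ge> 1"
  shows "\<exists>dE \<chi> U d0 d1 d2 R P0 P1.
           is_strategy n dE \<chi> U d0 d1 d2 R P0 P1 \<and>
           win_prob n \<chi> U R P0 P1 = (3/4) ^ n"
proof -
  define \<chi> where "\<chi> = vec 1 (\<lambda>_. 1::complex)"
  define R where "R = (\<lambda>b::bool. if b then 0\<^sub>m 1 1 else (1\<^sub>m 1 :: complex mat))"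
  define P0 where "P0 = (\<lambda>(s::bool list) (b::bool) e. Pm q0 s e)"
  define P1 where "P1 = (\<lambda>(s::bool list) (b::bool) e. Pm q1 s e)"
  have projR: "projector 1 (R b)" for b
    unfolding R_def projector_def by (auto simp: adj_one intro!: eq_matI)
  have sumR: "(\<Sum>x\<in>(UNIV::bool set). R x $$ (i,j)) = (if i = j then 1 else 0)" if "i < 1" "j < 1" for i j
    using that by (simp add: R_def UNIV_bool)
  have measR: "proj_meas 1 UNIV R"
    unfolding proj_meas_def using projR sumR by auto
  have measP: "proj_meas (2^n) (bitstrings n) (P0 s b') \<and> proj_meas (2^n) (bitstrings n) (P1 s b')"
    if "s \<in> bitstrings n" for s b'
  proof -
    have ls: "length s = n" using that by (simp add: bitstrings_def)
    show ?thesis unfolding proj_meas_def P0_def P1_def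
      using Pm_proj[OF qm0 ls] Pm_proj[OF qm1 ls] Pm_sum[OF qm0 ls] Pm_sum[OF qm1 ls] finite_bits[of n]
      unfolding bitstrings_def by auto
  qed
  have uv: "unit_vec 1 \<chi>" unfolding unit_vec_def \<chi>_def by simp
  have strat: "is_strategy n 1 \<chi> (Um n) (2^n) (2^n) 1 R P0 P1"
    unfolding is_strategy_def using uv measR measP Um_unitary[of n] by (simp add: four_pow)
  have inner: "(\<Sum>b'\<in>(UNIV :: bool set).
        expect (Um n *\<^sub>v kron_vec (Psi s r0 r1) \<chi>)
          (kron (kron (P0 s b' (if b' then r1 else r0)) (P1 s b' (if b' then r0 else r1))) (R b')))
      = G s r0 r1"
    if "s \<in> bitstrings n" "r0 \<in> bitstrings n" "r1 \<in> bitstrings n" for s r0 r1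
  proof -
    have l: "length s = n" "length r0 = n" "length r1 = n" using that by (auto simp: bitstrings_def)
    have ps: "Um n *\<^sub>v kron_vec (Psi s r0 r1) \<chi> = kron_vec (Xs s r0 r1) (Ys s r0 r1)"
      unfolding \<chi>_def kron_vec_chi using Um_Psi[OF l] .
    have dX: "dim_vec (Xs s r0 r1) = 2^n" "dim_vec (Ys s r0 r1) = 2^n"
      using Xs_dim[OF l] Ys_dim[OF l] by auto
    have cA: "Pm q0 s r0 \<in> carrier_mat (dim_vec (Xs s r0 r1)) (dim_vec (Xs s r0 r1))"
      using Pm_carrier[OF qm0 l(1) l(2)] dX by simp
    have cB: "Pm q1 s r1 \<in> carrier_mat (dim_vec (Ys s r0 r1)) (dim_vec (Ys s r0 r1))"
      using Pm_carrier[OF qm1 l(1) l(3)] dX by simp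
    have cA': "Pm q0 s r1 \<in> carrier_mat (2^n) (2^n)" using Pm_carrier[OF qm0 l(1) l(3)] .
    have cB': "Pm q1 s r0 \<in> carrier_mat (2^n) (2^n)" using Pm_carrier[OF qm1 l(1) l(2)] .
    have tF: "expect (kron_vec (Xs s r0 r1) (Ys s r0 r1)) (kron (kron (Pm q0 s r0) (Pm q1 s r1)) (R False))
       = G s r0 r1"
      unfolding R_def if_False kron_one1 using expect_kron[OF cA cB] EX[OF l] EY[OF l] G_idem by simp
    have tT: "expect (kron_vec (Xs s r0 r1) (Ys s r0 r1)) (kron (kron (Pm q0 s r1) (Pm q1 s r0)) (R True))
       = 0"
      unfolding R_def if_True kron_zero1 using carrier_matD[OF cA'] carrier_matD[OF cB'] dX by (intro expect_zero) simp_all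
    show ?thesis unfolding ps P0_def P1_def using tF tT by (simp add: UNIV_bool)
  qed
  have "win_prob n \<chi> (Um n) R P0 P1 = 1 / 2 ^ (3 * n) *
     (\<Sum>r0\<in>bitstrings n. \<Sum>r1\<in>bitstrings n. \<Sum>s\<in>bitstrings n. G s r0 r1)"
    unfolding win_prob_def using inner by (intro arg_cong2[where f="(*)"] refl sum.cong) auto
  also have "\<dots> = 1 / 2 ^ (3 * n) * 6 ^ n" by (simp add: G_sum)
  also have "\<dots> = (3/4) ^ n"
  proof -
    have "(2::complex) ^ (3 * n) = 8 ^ n" by (simp add: power_mult)
    moreover have "(6::complex) ^ n = 3 ^ n * 2 ^ n" by (simp flip: power_mult_distrib)
    moreover have "(8::complex) ^ n = 4 ^ n * 2 ^ n" by (simp flip: power_mult_distrib)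
    ultimately show ?thesis by (simp add: power_divide)
  qed
  finally have win: "win_prob n \<chi> (Um n) R P0 P1 = (3/4) ^ n" .
  show ?thesis using strat win by blast
qed


end
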